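(* For the average-cost MDP $\Lambda$ described in the context, there exists an optimal policy that is deterministic and stationary, i.e., there exists a map $\phi^*:\mathbb{N}^+\to\mathcal{A}$ such that the stationary policy that uses action $\phi^*(s)$ whenever the state is $s$ minimizes $V(\phi)$ over all (possibly history-dependent, randomized) policies $\phi$.
   Context: Fix $N\in\mathbb{N}^+$ vehicle types $\mathcal{N}=\{1,\dots,N\}$. Type $n$ has arrival probability $p_n\in(0,1]$, mean operational cost $c_n\ge 0$ and mean sensing capability $r_n\in(0,1]$. Fix constants $\beta\in(0,1)$ and $\epsilon>0$. The action set is $\mathcal{A}=2^{\mathcal{N}}$ (all subsets of $\mathcal{N}$, including $\emptyset$). For $a\in\mathcal{A}$ define the success probability $Q_\emptyset=0$ and $Q_a=1-\prod_{n\in a}(1-r_np_n)$ for $a\neq\emptyset$, and the expected recruitment cost $E_a=\sum_{n\in a}p_nc_n$ ($E_\emptyset=0$). For a state (age) $\delta\in\mathbb{N}^+$ define the expected freshness gain $G_a(\delta)=Q_a(\delta^2+2\delta)\epsilon-(1+\delta)^2\epsilon$ and the immediate cost $u(\delta,a)=(1-\beta)E_a-\beta G_a(\delta)$. The MDP $\Lambda$ has state space $\mathcal{S}=\mathbb{N}^+$, action space $\mathcal{A}$, and transition probabilities: from state $s$ under action $a$, go to state $1$ with probability $Q_a$ and to state $s+1$ with probability $1-Q_a$. For a policy $\phi$ (choosing action $A(t)$ at time $t$), the average cost is $V(\phi)=\limsup_{T\to\infty}\frac1T\mathbb{E}^\phi\big[\sum_{t=1}^T u(S(t),A(t))\big]$,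 with $S(1)=1$; a policy is optimal if it minimizes $V$. *)

theory Defs
  imports "HOL-Probability.Probability"
begin

text \<open>Vehicle types are 1..N; an action is a subset of {1..N}.
  Parameters p, c, r are functions on type indices.\<close>

definition Qa :: "(nat \<Rightarrow> real) \<Rightarrow> (nat \<Rightarrow> real) \<Rightarrow> nat set \<Rightarrow> real" where
  "Qa p r a = (if a = {} then 0 else 1 - (\<Prod>n\<in>a. 1 - r n * p n))"

definition Ea :: "(nat \<Rightarrow> real) \<Rightarrow> (nat \<Rightarrow> real) \<Rightarrow> nat set \<Rightarrow> real" where
  "Ea p c a = (\<Sum>n\<in>a. p n * c n)"

definition Ga :: "(nat \<Rightarrow> real) \<Rightarrow> (nat \<Rightarrow> real) \<Rightarrow> real \<Rightarrow> nat set \<Rightarrow> nat \<Rightarrow> real" where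
  "Ga p r eps a d = Qa p r a * (real d ^ 2 + 2 * real d) * eps - (1 + real d) ^ 2 * eps"

definition ucost :: "(nat \<Rightarrow> real) \<Rightarrow> (nat \<Rightarrow> real) \<Rightarrow> (nat \<Rightarrow> real) \<Rightarrow> real \<Rightarrow> real
    \<Rightarrow> nat \<Rightarrow> nat set \<Rightarrow> real" where
  "ucost p c r beta eps d a = (1 - beta) * Ea p c a - beta * Ga p r eps a d"

definition trans_pmf :: "(nat \<Rightarrow> real) \<Rightarrow> (nat \<Rightarrow> real) \<Rightarrow> nat set \<Rightarrow> nat \<Rightarrow> nat pmf" where
  "trans_pmf p r a s = map_pmf (\<lambda>b. if b then 1 else Suc s) (bernoulli_pmf (Qa p r a))"

type_synonym policy = "(nat \<times> nat set) list \<Rightarrow> nat \<Rightarrow> nat set pmf"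

definition valid_policy :: "nat \<Rightarrow> policy \<Rightarrow> bool" where
  "valid_policy N \<phi> \<longleftrightarrow> (\<forall>h s. set_pmf (\<phi> h s) \<subseteq> Pow {1..N})"

text \<open>Distribution of (history of the first t steps, current state S(t+1)), with S(1) = 1.\<close>
fun hist_pmf :: "(nat \<Rightarrow> real) \<Rightarrow> (nat \<Rightarrow> real) \<Rightarrow> policy \<Rightarrow> nat
    \<Rightarrow> ((nat \<times> nat set) list \<times> nat) pmf" where
  "hist_pmf p r \<phi> 0 = return_pmf ([], 1)"
| "hist_pmf p r \<phi> (Suc t) =
     bind_pmf (hist_pmf p r \<phi> t) (\<lambda>(h, s).
       bind_pmf (\<phi> h s) (\<lambda>a.
         map_pmf (\<lambda>s'. (h @ [(s, a)], s')) (trans_pmf p r a s)))"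

definition total_cost :: "(nat \<Rightarrow> real) \<Rightarrow> (nat \<Rightarrow> real) \<Rightarrow> (nat \<Rightarrow> real) \<Rightarrow> real \<Rightarrow> real
    \<Rightarrow> policy \<Rightarrow> nat \<Rightarrow> real" where
  "total_cost p c r beta eps \<phi> T =
     measure_pmf.expectation (hist_pmf p r \<phi> T)
       (\<lambda>(h, s). sum_list (map (\<lambda>(d, a). ucost p c r beta eps d a) h))"

definition avg_cost :: "(nat \<Rightarrow> real) \<Rightarrow> (nat \<Rightarrow> real) \<Rightarrow> (nat \<Rightarrow> real) \<Rightarrow> real \<Rightarrow> real
    \<Rightarrow> policy \<Rightarrow> ereal" where
  "avg_cost p c r beta eps \<phi> =
     limsup (\<lambda>T. ereal (total_cost p c r beta eps \<phi> T / real T))"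

definition stationary_det :: "(nat \<Rightarrow> nat set) \<Rightarrow> policy" where
  "stationary_det f = (\<lambda>h s. return_pmf (f s))"

end

theory Submission
  imports Defs
begin


locale aoi =
  fixes N :: nat and p c r :: "nat \<Rightarrow> real" and beta eps :: real
  assumes N1: "N \<ge> 1"
    and pp: "\<And>n. n \<in> {1..N} \<Longrightarrow> 0 < p n \<and> p n \<le> 1"
    and cc: "\<And>n. n \<in> {1..N} \<Longrightarrow> 0 \<le> c n"
    and rr: "\<And>n. n \<in> {1..N} \<Longrightarrow> 0 < r n \<and> r n \<le> 1"
    and b0: "0 < beta" and b1: "beta < 1" and e0: "0 < eps"
begin

abbreviation "Q a \<equiv> Qa p r a"
abbreviation "U s a \<equiv> ucost p c r beta eps s a"
abbreviation "E a \<equiv> Ea p c a"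

lemma Q_bounds: assumes "a \<subseteq> {1..N}" shows "0 \<le> Q a" "Q a \<le> 1"
proof -
  have fin: "finite a" using assms finite_subset by blast
  have t: "\<And>n. n \<in> a \<Longrightarrow> 0 \<le> 1 - r n * p n \<and> 1 - r n * p n \<le> 1"
  proof -
    fix n assume "n \<in> a" then have "n \<in> {1..N}" using assms by blast
    then have "0 < p n" "p n \<le> 1" "0 < r n" "r n \<le> 1" using pp rr by auto
    then have "r n * p n \<le> 1" "0 \<le> r n * p n" by (simp_all add: mult_le_one)
    then show "0 \<le> 1 - r n * p n \<and> 1 - r n * p n \<le> 1" by simp
  qed
  have "0 \<le> (\<Prod>n\<in>a. 1 - r n * p n)" using t by (simp add: prod_nonneg)
  moreover have "(\<Prod>n\<in>a. 1 - r n * p n) \<le> 1" using t by (simp add: prod_le_1)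
  ultimately show "0 \<le> Q a" "Q a \<le> 1" unfolding Qa_def by auto
qed

lemma E_nonneg: assumes "a \<subseteq> {1..N}" shows "0 \<le> E a"
proof -
  have "\<And>n. n \<in> a \<Longrightarrow> 0 \<le> p n * c n"
  proof -
    fix n assume "n \<in> a" then have "n \<in> {1..N}" using assms by blast
    then show "0 \<le> p n * c n" using pp[of n] cc[of n] by simp
  qed
  then show ?thesis unfolding Ea_def by (intro sum_nonneg) auto
qed

lemma U_expand: "U s a = (1-beta) * E a + beta*eps*(1 + (1 - Q a) * (real s ^ 2 + 2 * real s))"
  unfolding ucost_def Ga_def by (simp add: algebra_simps power2_eq_square)

lemma U_lower: assumes "a \<subseteq> {1..N}"
  shows "beta*eps*(1 + (1 - Q a) * (real s ^ 2 + 2 * real s)) \<le> U s a"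
  using E_nonneg[OF assms] b1 by (simp add: U_expand)

lemma U_nonneg: assumes "a \<subseteq> {1..N}" shows "0 \<le> U s a"
proof -
  have "0 \<le> beta*eps*(1 + (1 - Q a) * (real s ^ 2 + 2 * real s))"
    using Q_bounds[OF assms] b0 e0 by (intro mult_nonneg_nonneg) auto
  then show ?thesis using U_lower[OF assms, of s] by linarith
qed

lemma cube_drift: assumes "a \<subseteq> {1..N}"
  shows "Q a * 1 + (1 - Q a) * (real s + 1)^3 - real s ^ 3 \<le> 3 * U s a / (beta*eps)"
proof -
  let ?Q = "Q a" and ?s = "real s"
  have q: "0 \<le> ?Q" "?Q \<le> 1" using Q_bounds[OF assms] by auto
  have "0 \<le> 3 * ?s * (1 - ?Q) + 2 + ?Q * ?s^3" using q by simp
  then have "?Q * 1 + (1 - ?Q) * (?s + 1)^3 - ?s ^ 3 \<le> 3 * (1 + (1 - ?Q) * (?s ^ 2 + 2 * ?s))"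
    by (simp add: algebra_simps power2_eq_square power3_eq_cube)
  also have "\<dots> \<le> 3 * U s a / (beta*eps)"
    using U_lower[OF assms, of s] b0 e0 by (simp add: field_simps)
  finally show ?thesis .
qed

end



lemma continuous_on_Min_image:
  fixes f :: "'a \<Rightarrow> real \<Rightarrow> real"
  assumes "finite A" "A \<noteq> {}" "\<And>a. a \<in> A \<Longrightarrow> continuous_on S (f a)"
  shows "continuous_on S (\<lambda>g. Min ((\<lambda>a. f a g) ` A))"
  using assms
proof (induction A rule: finite_ne_induct)
  case (singleton x) then show ?case by simp
next
  case (insert x F)
  have eq: "(\<lambda>g. Min ((\<lambda>a. f a g) ` insert x F)) = (\<lambda>g. min (f x g) (Min ((\<lambda>a. f a g) ` F)))"
    using insert by (auto simp: Min_insert)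
  have "continuous_on S (\<lambda>g. min (f x g) (Min ((\<lambda>a. f a g) ` F)))"
    using insert by (intro continuous_on_min) auto
  then show ?case unfolding eq .
qed

context aoi begin

definition qm where "qm = Max (Q ` Pow {1..N})"

lemma qm_ge: "a \<subseteq> {1..N} \<Longrightarrow> Q a \<le> qm"
  unfolding qm_def by (intro Max_ge) auto

lemma qm_pos: "0 < qm"
proof -
  have "1 \<in> {1..N}" using N1 by auto
  then have "Q {1} = r 1 * p 1" unfolding Qa_def by simp
  also have "\<dots> > 0" using pp[of 1] rr[of 1] N1 by simp
  finally show ?thesis using qm_ge[of "{1}"] N1 by simp
qed

lemma F_ex: "\<exists>a. a \<subseteq> {1..N} \<and> Q a = qm \<and> (\<forall>b. b \<subseteq> {1..N} \<and> Q b = qm \<longrightarrow> E a \<le> E b)"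
proof -
  let ?S = "{a. a \<subseteq> {1..N} \<and> Q a = qm}"
  have fin: "finite ?S" by simp
  have "qm \<in> Q ` Pow {1..N}" unfolding qm_def by (intro Max_in) auto
  then have ne: "?S \<noteq> {}" by auto
  have "Min (E ` ?S) \<in> E ` ?S" using fin ne by (intro Min_in) auto
  then obtain a where a: "a \<in> ?S" "E a = Min (E ` ?S)" by auto
  have "\<forall>b. b \<subseteq> {1..N} \<and> Q b = qm \<longrightarrow> E a \<le> E b"
    using a fin by auto
  then show ?thesis using a by blast
qed

definition F where "F = (SOME a. a \<subseteq> {1..N} \<and> Q a = qm \<and> (\<forall>b. b \<subseteq> {1..N} \<and> Q b = qm \<longrightarrow> E a \<le> E b))"

lemma F_props: "F \<subseteq> {1..N}" "Q F = qm" "\<And>b. b \<subseteq> {1..N} \<Longrightarrow> Q b = qm \<Longrightarrow> E F \<le> E b"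
  using someI_ex[OF F_ex] unfolding F_def[symmetric] by auto

abbreviation "q \<equiv> Q F"

lemma q_pos: "0 < q" and q_le1: "q \<le> 1" and q_max: "a \<subseteq> {1..N} \<Longrightarrow> Q a \<le> q"
  using F_props qm_pos Q_bounds[OF F_props(1)] qm_ge by auto

definition dl where "dl = Min (insert 1 ((\<lambda>a. q - Q a) ` {a. a \<subseteq> {1..N} \<and> Q a < q}))"

lemma dl_pos: "0 < dl"
  unfolding dl_def by (subst Min_gr_iff) auto

lemma dl_le: "a \<subseteq> {1..N} \<Longrightarrow> Q a < q \<Longrightarrow> dl \<le> q - Q a"
  unfolding dl_def by (intro Min_le) auto

definition Bc where "Bc = beta*eps*(1-q)"

definition hT :: "real \<Rightarrow> nat \<Rightarrow> real" where
  "hT g s = Bc/q * real s ^ 2 + 2*Bc/q^2 * real s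
     + ((1-beta)*E F + beta*eps - g + (1-q)*(Bc/q + 2*Bc/q^2))/q"

lemma Bc_nonneg: "0 \<le> Bc" unfolding Bc_def using b0 e0 q_le1 by simp

lemma hT_rec: "hT g s = U s F - g + (1-q) * hT g (Suc s)"
proof -
  have q0: "q \<noteq> 0" using q_pos by simp
  show ?thesis unfolding hT_def U_expand Bc_def using q0
    by (simp add: field_simps power2_eq_square)
qed

lemma hT_shift: "hT g s = hT 0 s - g/q"
  unfolding hT_def using q_pos by (simp add: field_simps)

lemma hT_lb: "- g/q \<le> hT g s"
proof -
  have c: "0 \<le> (1-beta)*E F + beta*eps + (1-q)*(Bc/q + 2*Bc/q^2)"
    using E_nonneg[OF F_props(1)] b0 b1 e0 Bc_nonneg q_pos q_le1 by simp
  have "0 \<le> Bc/q * real s ^ 2 + 2*Bc/q^2 * real s"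
    using Bc_nonneg q_pos by simp
  moreover have "- g/q \<le> ((1-beta)*E F + beta*eps - g + (1-q)*(Bc/q + 2*Bc/q^2))/q"
  proof -
    let ?X = "(1-beta)*E F + beta*eps + (1-q)*(Bc/q + 2*Bc/q^2)"
    have "0 \<le> ?X/q" using c q_pos by simp
    moreover have "((1-beta)*E F + beta*eps - g + (1-q)*(Bc/q + 2*Bc/q^2))/q = ?X/q - g/q"
      by (simp add: diff_divide_distrib add_divide_distrib)
    ultimately show ?thesis by linarith
  qed
  ultimately show ?thesis unfolding hT_def by linarith
qed

definition G where "G = q * hT 0 1"

lemma G_nonneg: "0 \<le> G" unfolding G_def using hT_lb[of 0 1] q_pos by simp

lemma hT_G: "hT G 1 = 0"
  unfolding G_def using hT_shift[of "q * hT 0 1" 1] q_pos by simp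

definition M0 where "M0 = (1-beta)*E F/dl"

definition s0 :: nat where "s0 = max 2 (nat \<lceil>(M0 + G/q)/(beta*eps)\<rceil>)"

lemma s0_ge2: "2 \<le> s0" unfolding s0_def by simp

lemma s0_big: assumes "s0 \<le> s" shows "M0 + G/q \<le> beta*eps*real s"
proof -
  have "(M0 + G/q)/(beta*eps) \<le> real s"
    using assms unfolding s0_def by linarith
  then show ?thesis using b0 e0 by (simp add: field_simps)
qed

lemma tail_opt:
  assumes g: "0 \<le> g" "g \<le> G" and s: "s0 \<le> s" and a: "a \<subseteq> {1..N}"
  shows "U s F - g + (1-q) * hT g (Suc s) \<le> U s a - g + (1 - Q a) * hT g (Suc s)"
proof -
  let ?X = "beta*eps*(real s ^ 2 + 2 * real s) + hT g (Suc s)"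
  have diff: "(U s a - g + (1 - Q a) * hT g (Suc s)) - (U s F - g + (1-q) * hT g (Suc s))
      = (1-beta)*(E a - E F) + (q - Q a) * ?X"
    unfolding U_expand by (simp add: algebra_simps)
  have Ea0: "0 \<le> E a" using E_nonneg[OF a] .
  have "0 \<le> (1-beta)*(E a - E F) + (q - Q a) * ?X"
  proof (cases "Q a < q")
    case True
    have "- G/q \<le> hT g (Suc s)" using hT_lb[of g "Suc s"] g q_pos
      by (smt (verit, ccfv_SIG) divide_right_mono)
    moreover have "beta*eps*real s \<le> beta*eps*(real s ^ 2 + 2 * real s)"
      using b0 e0 by (intro mult_left_mono) (auto simp: power2_eq_square)
    ultimately have X: "M0 \<le> ?X" using s0_big[OF s] by linarith
    have M0nn: "0 \<le> M0" unfolding M0_def using E_nonneg[OF F_props(1)] b1 dl_pos by simp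
    have "dl * M0 \<le> (q - Q a) * ?X"
      using dl_le[OF a True] X M0nn dl_pos by (intro mult_mono) auto
    moreover have "dl * M0 = (1-beta)*E F" unfolding M0_def using dl_pos by simp
    moreover have "(1-beta)*(E a - E F) = (1-beta)*E a - (1-beta)*E F" by (simp add: algebra_simps)
    moreover have "0 \<le> (1-beta)*E a" using Ea0 b1 by simp
    ultimately show ?thesis by linarith
  next
    case False
    then have "Q a = q" using q_max[OF a] by simp
    then have "E F \<le> E a" using F_props a by auto
    then show ?thesis using \<open>Q a = q\<close> b1 by simp
  qed
  then show ?thesis using diff by linarith
qed

primrec hb :: "real \<Rightarrow> nat \<Rightarrow> real" where
  "hb g 0 = hT g s0"
| "hb g (Suc k) = Min ((\<lambda>a. U (s0 - Suc k) a - g + (1 - Q a) * hb g k) ` Pow {1..N})"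

definition hh :: "real \<Rightarrow> nat \<Rightarrow> real" where
  "hh g s = (if s0 \<le> s then hT g s else hb g (s0 - s))"

lemma hh_lt: assumes "s < s0"
  shows "hh g s = Min ((\<lambda>a. U s a - g + (1 - Q a) * hh g (Suc s)) ` Pow {1..N})"
proof -
  obtain k where k: "s0 - s = Suc k" using assms by (cases "s0 - s") auto
  have "s0 - Suc k = s" using k by simp
  moreover have "hh g (Suc s) = hb g k"
  proof (cases "s0 \<le> Suc s")
    case True then have "k = 0" "Suc s = s0" using k assms by auto
    then show ?thesis by (simp add: hh_def)
  next
    case False then have "s0 - Suc s = k" using k by auto
    then show ?thesis using False by (simp add: hh_def)
  qed
  ultimately show ?thesis using assms k unfolding hh_def by simp
qed

lemma hh_ge: "s0 \<le> s \<Longrightarrow> hh g s = hT g s" unfolding hh_def by simp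

lemma hh_le_all: assumes a: "a \<subseteq> {1..N}" and lt: "s < s0"
  shows "hh g s \<le> U s a - g + (1 - Q a) * hh g (Suc s)"
proof -
  have "Min ((\<lambda>a. U s a - g + (1 - Q a) * hh g (Suc s)) ` Pow {1..N}) \<le> U s a - g + (1 - Q a) * hh g (Suc s)"
    by (rule Min_le) (use a in auto)
  then show ?thesis using hh_lt[OF lt, of g] by linarith
qed

lemma acoe:
  assumes g: "0 \<le> g" "g \<le> G" and a: "a \<subseteq> {1..N}"
  shows "hh g s \<le> U s a - g + (1 - Q a) * hh g (Suc s)"
proof (cases "s < s0")
  case True then show ?thesis using hh_le_all[OF a] by simp
next
  case False
  then have "hh g s = U s F - g + (1-q) * hT g (Suc s)" "hh g (Suc s) = hT g (Suc s)"
    using hh_ge[of s g] hh_ge[of "Suc s" g] hT_rec[of g s] False by auto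
  then show ?thesis using tail_opt[OF g _ a, of s] False by simp
qed

lemma hh_upper: "hh g s \<le> hT g s"
proof (cases "s0 \<le> s")
  case True then show ?thesis by (simp add: hh_ge)
next
  case False
  then have "s \<le> s0" by simp
  then show ?thesis
  proof (induction rule: inc_induct)
    case base then show ?case by (simp add: hh_ge)
  next
    case (step n)
    have "hh g n \<le> U n F - g + (1 - q) * hh g (Suc n)"
      using hh_le_all[OF F_props(1) step(2)] .
    also have "\<dots> \<le> U n F - g + (1 - q) * hT g (Suc n)"
      using step(3) q_le1 by (simp add: mult_left_mono)
    also have "\<dots> = hT g n" using hT_rec[of g n] by simp
    finally show ?case .
  qed
qed

lemma hh0_nonneg: "0 \<le> hh 0 s"
proof (cases "s0 \<le> s")
  case True then show ?thesis using hh_ge hT_lb[of 0 s] by simp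
next
  case False
  then have "s \<le> s0" by simp
  then show ?thesis
  proof (induction rule: inc_induct)
    case base then show ?case using hh_ge hT_lb[of 0 s0] by simp
  next
    case (step n)
    have H: "\<And>a. a \<subseteq> {1..N} \<Longrightarrow> 0 \<le> U n a - 0 + (1 - Q a) * hh 0 (Suc n)"
      using step(3) U_nonneg Q_bounds by simp
    have B: "\<forall>x\<in>(\<lambda>a. U n a - 0 + (1 - Q a) * hh 0 (Suc n)) ` Pow {1..N}. 0 \<le> x"
    proof
      fix x assume "x \<in> (\<lambda>a. U n a - 0 + (1 - Q a) * hh 0 (Suc n)) ` Pow {1..N}"
      then obtain a where "a \<subseteq> {1..N}" "x = U n a - 0 + (1 - Q a) * hh 0 (Suc n)" by blast
      then show "0 \<le> x" using H by simp
    qed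
    have "0 \<le> Min ((\<lambda>a. U n a - 0 + (1 - Q a) * hh 0 (Suc n)) ` Pow {1..N})"
      using B by (subst Min_ge_iff) auto
    then show ?case using hh_lt[OF step(2), of 0] by simp
  qed
qed

lemma hb_cont: "continuous_on UNIV (\<lambda>g. hb g k)"
proof (induction k)
  case 0 show ?case unfolding hb.simps hT_def
    by (intro continuous_on_add continuous_on_diff continuous_on_const continuous_on_id
          continuous_on_mult continuous_on_divide) (use q_pos in auto)
next
  case (Suc k)
  show ?case unfolding hb.simps
  proof (rule continuous_on_Min_image)
    fix a
    show "continuous_on UNIV (\<lambda>g. U (s0 - Suc k) a - g + (1 - Q a) * hb g k)"
      by (intro continuous_on_add continuous_on_diff continuous_on_const continuous_on_id
          continuous_on_mult Suc.IH)
  qed (simp, blast)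
qed

lemma gstar_ex: "\<exists>g. 0 \<le> g \<and> g \<le> G \<and> hh g 1 = 0"
proof -
  have eq: "\<And>g. hh g 1 = hb g (s0 - 1)" unfolding hh_def using s0_ge2 by simp
  have "hh G 1 \<le> 0" using hh_upper[of G 1] hT_G by simp
  moreover have "0 \<le> hh 0 1" using hh0_nonneg .
  moreover have "continuous_on {0..G} (\<lambda>g. hb g (s0 - 1))"
    using hb_cont continuous_on_subset by blast
  ultimately obtain g where "0 \<le> g" "g \<le> G" "hb g (s0 - 1) = 0"
    using IVT2'[of "\<lambda>g. hb g (s0 - 1)" G 0 0] G_nonneg unfolding eq by auto
  then show ?thesis using eq by auto
qed

end



lemma exp_bind_fin:
  fixes h :: "'b \<Rightarrow> real"
  assumes "finite (set_pmf M)" "\<And>x. x \<in> set_pmf M \<Longrightarrow> finite (set_pmf (f x))"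
  shows "measure_pmf.expectation (M \<bind> f) h = measure_pmf.expectation M (\<lambda>x. measure_pmf.expectation (f x) h)"
proof -
  have "measure_pmf.expectation (M \<bind> f) h = (\<Sum>a\<in>set_pmf M. pmf M a *\<^sub>R measure_pmf.expectation (f a) h)"
    using assms by (intro pmf_expectation_bind) auto
  also have "\<dots> = measure_pmf.expectation M (\<lambda>x. measure_pmf.expectation (f x) h)"
    using assms by (intro integral_measure_pmf[symmetric]) auto
  finally show ?thesis .
qed

lemma exp_mono_fin:
  fixes f g :: "'a \<Rightarrow> real"
  assumes "finite (set_pmf M)" "\<And>x. x \<in> set_pmf M \<Longrightarrow> f x \<le> g x"
  shows "measure_pmf.expectation M f \<le> measure_pmf.expectation M g"
proof -
  have "measure_pmf.expectation M f = (\<Sum>a\<in>set_pmf M. pmf M a *\<^sub>R f a)"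
    using assms by (intro integral_measure_pmf) auto
  also have "\<dots> \<le> (\<Sum>a\<in>set_pmf M. pmf M a *\<^sub>R g a)"
    using assms by (intro sum_mono) (auto intro: mult_left_mono)
  also have "\<dots> = measure_pmf.expectation M g"
    using assms by (intro integral_measure_pmf[symmetric]) auto
  finally show ?thesis .
qed

lemma exp_const: "measure_pmf.expectation M (\<lambda>x. (c::real)) = c"
  by simp

lemma exp_add_const:
  fixes f :: "'a \<Rightarrow> real"
  assumes "finite (set_pmf M)"
  shows "measure_pmf.expectation M (\<lambda>x. f x + c) = measure_pmf.expectation M f + c"
  using assms by (subst Bochner_Integration.integral_add) (auto intro: integrable_measure_pmf_finite)

lemma exp_cmult_add:
  fixes f g :: "'a \<Rightarrow> real"
  assumes "finite (set_pmf M)"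
  shows "measure_pmf.expectation M (\<lambda>x. w * f x + g x) = w * measure_pmf.expectation M f + measure_pmf.expectation M g"
  using assms by (subst Bochner_Integration.integral_add) (auto intro: integrable_measure_pmf_finite)

context aoi begin

definition cs :: "(nat \<times> nat set) list \<Rightarrow> real" where
  "cs h = sum_list (map (\<lambda>(d, a). U d a) h)"

lemma cs_snoc: "cs (h @ [(s, a)]) = cs h + U s a"
  unfolding cs_def by simp

lemma fin_trans: "finite (set_pmf (trans_pmf p r a s))"
  unfolding trans_pmf_def by simp

lemma exp_trans:
  assumes "a \<subseteq> {1..N}"
  shows "measure_pmf.expectation (trans_pmf p r a s) k = Q a * k 1 + (1 - Q a) * k (Suc s)"
  using Q_bounds[OF assms] unfolding trans_pmf_def by (simp add: algebra_simps)

lemma fin_hist: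
  assumes "\<And>h s a. a \<in> set_pmf (\<psi> h s) \<Longrightarrow> a \<subseteq> {1..N}"
  shows "finite (set_pmf (hist_pmf p r \<psi> T))"
proof (induction T)
  case 0 then show ?case by simp
next
  case (Suc T)
  have fa: "\<And>h s. finite (set_pmf (\<psi> h s))"
    using assms by (meson finite_Pow_iff finite_atLeastAtMost finite_subset subsetI PowI)
  show ?case using Suc fa fin_trans by (auto simp: set_bind_pmf split: prod.splits)
qed

lemma hist_step:
  fixes \<Phi> :: "(nat \<times> nat set) list \<times> nat \<Rightarrow> real"
  assumes A: "\<And>h s a. a \<in> set_pmf (\<psi> h s) \<Longrightarrow> a \<subseteq> {1..N}"
  shows "measure_pmf.expectation (hist_pmf p r \<psi> (Suc T)) \<Phi> =
    measure_pmf.expectation (hist_pmf p r \<psi> T) (\<lambda>(h, s).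
      measure_pmf.expectation (\<psi> h s) (\<lambda>a. Q a * \<Phi> (h @ [(s, a)], 1) + (1 - Q a) * \<Phi> (h @ [(s, a)], Suc s)))"
proof -
  have fa: "\<And>h s. finite (set_pmf (\<psi> h s))"
    using A by (meson finite_Pow_iff finite_atLeastAtMost finite_subset subsetI PowI)
  have inner: "measure_pmf.expectation (\<psi> h s \<bind> (\<lambda>a. map_pmf (\<lambda>s'. (h @ [(s, a)], s')) (trans_pmf p r a s))) \<Phi>
     = measure_pmf.expectation (\<psi> h s) (\<lambda>a. Q a * \<Phi> (h @ [(s, a)], 1) + (1 - Q a) * \<Phi> (h @ [(s, a)], Suc s))" for h s
  proof -
    have "measure_pmf.expectation (\<psi> h s \<bind> (\<lambda>a. map_pmf (\<lambda>s'. (h @ [(s, a)], s')) (trans_pmf p r a s))) \<Phi>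
       = measure_pmf.expectation (\<psi> h s) (\<lambda>a. measure_pmf.expectation (map_pmf (\<lambda>s'. (h @ [(s, a)], s')) (trans_pmf p r a s)) \<Phi>)"
      using fa fin_trans by (intro exp_bind_fin) auto
    also have "\<dots> = measure_pmf.expectation (\<psi> h s) (\<lambda>a. Q a * \<Phi> (h @ [(s, a)], 1) + (1 - Q a) * \<Phi> (h @ [(s, a)], Suc s))"
      apply (intro Bochner_Integration.integral_cong_AE)
        apply simp apply simp
      apply (rule AE_pmfI)
      using A by (subst integral_map_pmf) (simp add: exp_trans)
    finally show ?thesis .
  qed
  have "measure_pmf.expectation (hist_pmf p r \<psi> (Suc T)) \<Phi> =
     measure_pmf.expectation (hist_pmf p r \<psi> T) (\<lambda>x. measure_pmf.expectation ((\<lambda>(h, s).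
       \<psi> h s \<bind> (\<lambda>a. map_pmf (\<lambda>s'. (h @ [(s, a)], s')) (trans_pmf p r a s))) x) \<Phi>)"
    unfolding hist_pmf.simps
    using fin_hist[of \<psi>, OF A] fa fin_trans by (intro exp_bind_fin) (auto simp: set_bind_pmf split: prod.splits)
  also have "\<dots> = measure_pmf.expectation (hist_pmf p r \<psi> T) (\<lambda>(h, s).
      measure_pmf.expectation (\<psi> h s) (\<lambda>a. Q a * \<Phi> (h @ [(s, a)], 1) + (1 - Q a) * \<Phi> (h @ [(s, a)], Suc s)))"
    by (intro arg_cong[where f="measure_pmf.expectation _"]) (auto simp: inner)
  finally show ?thesis .
qed

lemma drift_lower:
  assumes A: "\<And>h s a. a \<in> set_pmf (\<psi> h s) \<Longrightarrow> a \<subseteq> {1..N}"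
    and H: "\<And>h s a. a \<in> set_pmf (\<psi> h s) \<Longrightarrow> k s + g \<le> w * U s a + (Q a * k 1 + (1 - Q a) * k (Suc s))"
  shows "real T * g + k 1 \<le> measure_pmf.expectation (hist_pmf p r \<psi> T) (\<lambda>(h, s). w * cs h + k s)"
proof (induction T)
  case 0 then show ?case by (simp add: cs_def)
next
  case (Suc T)
  have fa: "\<And>h s. finite (set_pmf (\<psi> h s))"
    using A by (meson finite_Pow_iff finite_atLeastAtMost finite_subset subsetI PowI)
  let ?\<Phi> = "\<lambda>(h, s). w * cs h + k s"
  have step: "(\<lambda>(h, s). w * cs h + k s) x + g \<le> (\<lambda>(h, s).
      measure_pmf.expectation (\<psi> h s) (\<lambda>a. Q a * ?\<Phi> (h @ [(s, a)], 1) + (1 - Q a) * ?\<Phi> (h @ [(s, a)], Suc s))) x" for x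
  proof (cases x)
    case (Pair h s)
    have "w * cs h + k s + g = measure_pmf.expectation (\<psi> h s) (\<lambda>a. w * cs h + k s + g)" by simp
    also have "\<dots> \<le> measure_pmf.expectation (\<psi> h s) (\<lambda>a. Q a * ?\<Phi> (h @ [(s, a)], 1) + (1 - Q a) * ?\<Phi> (h @ [(s, a)], Suc s))"
    proof (rule exp_mono_fin[OF fa])
      fix a assume a: "a \<in> set_pmf (\<psi> h s)"
      have "Q a * ?\<Phi> (h @ [(s, a)], 1) + (1 - Q a) * ?\<Phi> (h @ [(s, a)], Suc s)
          = w * cs h + w * U s a + (Q a * k 1 + (1 - Q a) * k (Suc s))"
        by (simp add: cs_snoc algebra_simps)
      then show "w * cs h + k s + g \<le> Q a * ?\<Phi> (h @ [(s, a)], 1) + (1 - Q a) * ?\<Phi> (h @ [(s, a)], Suc s)"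
        using H[OF a] by linarith
    qed
    finally show ?thesis using Pair by simp
  qed
  have "real (Suc T) * g + k 1 = (real T * g + k 1) + g" by (simp add: algebra_simps)
  also have "\<dots> \<le> measure_pmf.expectation (hist_pmf p r \<psi> T) ?\<Phi> + g" using Suc by simp
  also have "\<dots> = measure_pmf.expectation (hist_pmf p r \<psi> T) (\<lambda>x. ?\<Phi> x + g)"
    using fin_hist[of \<psi>, OF A] by (rule exp_add_const[symmetric])
  also have "\<dots> \<le> measure_pmf.expectation (hist_pmf p r \<psi> T) (\<lambda>(h, s).
      measure_pmf.expectation (\<psi> h s) (\<lambda>a. Q a * ?\<Phi> (h @ [(s, a)], 1) + (1 - Q a) * ?\<Phi> (h @ [(s, a)], Suc s)))"
    by (rule exp_mono_fin[OF fin_hist[of \<psi>, OF A] step])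
  also have "\<dots> = measure_pmf.expectation (hist_pmf p r \<psi> (Suc T)) ?\<Phi>"
    by (rule hist_step[of \<psi>, OF A, symmetric])
  finally show ?case .
qed

lemma drift_upper:
  assumes A: "\<And>h s a. a \<in> set_pmf (\<psi> h s) \<Longrightarrow> a \<subseteq> {1..N}"
    and H: "\<And>h s a. a \<in> set_pmf (\<psi> h s) \<Longrightarrow> k s + g \<ge> w * U s a + (Q a * k 1 + (1 - Q a) * k (Suc s))"
  shows "real T * g + k 1 \<ge> measure_pmf.expectation (hist_pmf p r \<psi> T) (\<lambda>(h, s). w * cs h + k s)"
proof (induction T)
  case 0 then show ?case by (simp add: cs_def)
next
  case (Suc T)
  have fa: "\<And>h s. finite (set_pmf (\<psi> h s))"
    using A by (meson finite_Pow_iff finite_atLeastAtMost finite_subset subsetI PowI)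
  let ?\<Phi> = "\<lambda>(h, s). w * cs h + k s"
  have step: "(\<lambda>(h, s). w * cs h + k s) x + g \<ge> (\<lambda>(h, s).
      measure_pmf.expectation (\<psi> h s) (\<lambda>a. Q a * ?\<Phi> (h @ [(s, a)], 1) + (1 - Q a) * ?\<Phi> (h @ [(s, a)], Suc s))) x" for x
  proof (cases x)
    case (Pair h s)
    have "measure_pmf.expectation (\<psi> h s) (\<lambda>a. Q a * ?\<Phi> (h @ [(s, a)], 1) + (1 - Q a) * ?\<Phi> (h @ [(s, a)], Suc s))
        \<le> measure_pmf.expectation (\<psi> h s) (\<lambda>a. w * cs h + k s + g)"
    proof (rule exp_mono_fin[OF fa])
      fix a assume a: "a \<in> set_pmf (\<psi> h s)"
      have "Q a * ?\<Phi> (h @ [(s, a)], 1) + (1 - Q a) * ?\<Phi> (h @ [(s, a)], Suc s)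
          = w * cs h + w * U s a + (Q a * k 1 + (1 - Q a) * k (Suc s))"
        by (simp add: cs_snoc algebra_simps)
      then show "Q a * ?\<Phi> (h @ [(s, a)], 1) + (1 - Q a) * ?\<Phi> (h @ [(s, a)], Suc s) \<le> w * cs h + k s + g"
        using H[OF a] by linarith
    qed
    also have "\<dots> = w * cs h + k s + g" by simp
    finally show ?thesis using Pair by simp
  qed
  have "measure_pmf.expectation (hist_pmf p r \<psi> (Suc T)) ?\<Phi> = measure_pmf.expectation (hist_pmf p r \<psi> T) (\<lambda>(h, s).
      measure_pmf.expectation (\<psi> h s) (\<lambda>a. Q a * ?\<Phi> (h @ [(s, a)], 1) + (1 - Q a) * ?\<Phi> (h @ [(s, a)], Suc s)))"
    by (rule hist_step[of \<psi>, OF A])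
  also have "\<dots> \<le> measure_pmf.expectation (hist_pmf p r \<psi> T) (\<lambda>x. ?\<Phi> x + g)"
    by (rule exp_mono_fin[OF fin_hist[of \<psi>, OF A] step])
  also have "\<dots> = measure_pmf.expectation (hist_pmf p r \<psi> T) ?\<Phi> + g"
    using fin_hist[of \<psi>, OF A] by (rule exp_add_const)
  also have "\<dots> \<le> (real T * g + k 1) + g" using Suc by simp
  also have "\<dots> = real (Suc T) * g + k 1" by (simp add: algebra_simps)
  finally show ?case .
qed

end



lemma limsup_upper_aux:
  fixes x :: "nat \<Rightarrow> real"
  assumes "\<And>T. T \<ge> 1 \<Longrightarrow> x T \<le> g + D / real T"
  shows "limsup (\<lambda>T. ereal (x T)) \<le> ereal g"
proof -
  have "limsup (\<lambda>T. ereal (x T)) \<le> limsup (\<lambda>T. ereal (g + D / real T))"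
    using assms by (intro Limsup_mono) (auto simp: eventually_sequentially)
  also have "\<dots> = ereal g"
  proof (rule lim_imp_Limsup)
    show "(\<lambda>T. ereal (g + D / real T)) \<longlonglongrightarrow> ereal g"
      using tendsto_add[OF tendsto_const[of g] lim_const_over_n[of D]]
      by (auto intro: tendsto_ereal)
  qed simp
  finally show ?thesis .
qed

lemma limsup_lower_aux:
  fixes x :: "nat \<Rightarrow> real"
  assumes "\<And>e. e > 0 \<Longrightarrow> \<exists>D. \<forall>T \<ge> 1. g - e - D / real T \<le> x T"
  shows "ereal g \<le> limsup (\<lambda>T. ereal (x T))"
proof (rule ereal_le_epsilon2)
  fix e :: real assume e: "0 < e"
  obtain D where D: "\<And>T. T \<ge> 1 \<Longrightarrow> g - e - D / real T \<le> x T" using assms[OF e] by blast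
  have "ereal (g - e) = limsup (\<lambda>T. ereal (g - e - D / real T))"
  proof (rule lim_imp_Limsup[symmetric])
    show "(\<lambda>T. ereal (g - e - D / real T)) \<longlonglongrightarrow> ereal (g - e)"
      using tendsto_diff[OF tendsto_const[of "g - e"] lim_const_over_n[of D]]
      by (auto intro: tendsto_ereal)
  qed simp
  also have "\<dots> \<le> limsup (\<lambda>T. ereal (x T))"
    using D by (intro Limsup_mono) (auto simp: eventually_sequentially)
  finally have "ereal (g - e) \<le> limsup (\<lambda>T. ereal (x T))" .
  then have "ereal (g - e) + ereal e \<le> limsup (\<lambda>T. ereal (x T)) + ereal e"
    by (rule add_right_mono)
  then show "ereal g \<le> limsup (\<lambda>T. ereal (x T)) + ereal e" by simp
qed

lemma cubic_bound:
  fixes B lam :: real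
  assumes "0 \<le> B" "0 < lam"
  shows "B * real s ^ 2 - lam * real s ^ 3 \<le> B * (B / lam)^2"
proof (cases "real s \<le> B / lam")
  case True
  have "B * real s ^ 2 \<le> B * (B / lam)^2"
    using True assms by (intro mult_left_mono power_mono) auto
  moreover have "0 \<le> lam * real s ^ 3" using assms by simp
  ultimately show ?thesis by linarith
next
  case False
  then have "B < lam * real s" using assms by (simp add: field_simps)
  then have "B * real s ^ 2 \<le> lam * real s * real s ^ 2"
    by (intro mult_right_mono) auto
  then have "B * real s ^ 2 - lam * real s ^ 3 \<le> 0" by (simp add: power3_eq_cube power2_eq_square algebra_simps)
  moreover have "0 \<le> B * (B / lam)^2" using assms by simp
  ultimately show ?thesis by linarith
qed

context aoi begin

lemma tc_eq: "total_cost p c r beta eps \<psi> T = measure_pmf.expectation (hist_pmf p r \<psi> T) (\<lambda>(h, s). cs h)"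
  unfolding total_cost_def cs_def by simp

lemma exp_split:
  fixes M :: "((nat \<times> nat set) list \<times> nat) pmf"
  assumes "finite (set_pmf M)"
  shows "measure_pmf.expectation M (\<lambda>(h, s). w * cs h + k s)
     = w * measure_pmf.expectation M (\<lambda>(h, s). cs h) + measure_pmf.expectation M (\<lambda>(h, s). k s)"
proof -
  have "(\<lambda>(h, s). w * cs h + k s) = (\<lambda>x. w * (case x of (h, s) \<Rightarrow> cs h) + (case x of (h, s) \<Rightarrow> k s))"
    by (auto simp: fun_eq_iff)
  then show ?thesis using exp_cmult_add[OF assms, of w "\<lambda>(h, s). cs h" "\<lambda>(h, s). k s"] by simp
qed

lemma main:
  "\<exists>f :: nat \<Rightarrow> nat set. (\<forall>s. f s \<subseteq> {1..N}) \<and>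
      (\<forall>\<psi>. valid_policy N \<psi> \<longrightarrow>
         avg_cost p c r beta eps (stationary_det f) \<le> avg_cost p c r beta eps \<psi>)"
proof -
  obtain g where g: "0 \<le> g" "g \<le> G" "hh g 1 = 0" using gstar_ex by blast
  define f where "f s = (if s0 \<le> s then F else
      (SOME a. a \<subseteq> {1..N} \<and> hh g s = U s a - g + (1 - Q a) * hh g (Suc s)))" for s
  have f_props: "f s \<subseteq> {1..N} \<and> hh g s = U s (f s) - g + (1 - Q (f s)) * hh g (Suc s)" for s
  proof (cases "s0 \<le> s")
    case True
    then show ?thesis using F_props(1) hh_ge[OF True] hh_ge[of "Suc s"] True hT_rec[of g s]
      unfolding f_def by simp
  next
    case False
    then have lt: "s < s0" by simp
    have "Min ((\<lambda>a. U s a - g + (1 - Q a) * hh g (Suc s)) ` Pow {1..N})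
        \<in> (\<lambda>a. U s a - g + (1 - Q a) * hh g (Suc s)) ` Pow {1..N}"
      by (intro Min_in) auto
    then have ex: "\<exists>a. a \<subseteq> {1..N} \<and> hh g s = U s a - g + (1 - Q a) * hh g (Suc s)"
      using hh_lt[OF lt, of g] by auto
    show ?thesis using someI_ex[OF ex] False unfolding f_def by simp
  qed
  have fsub: "\<forall>s. f s \<subseteq> {1..N}" using f_props by blast
  define Lb where "Lb = min (- g/q) (Min (hh g ` {..<s0}))"
  have Lb: "Lb \<le> hh g s" for s
  proof (cases "s0 \<le> s")
    case True then show ?thesis using hh_ge[OF True] hT_lb[of g s] unfolding Lb_def by simp
  next
    case False
    then have "Min (hh g ` {..<s0}) \<le> hh g s" by (intro Min_le) auto
    then show ?thesis unfolding Lb_def by simp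
  qed
  define B' where "B' = Bc/q + 2*Bc/q^2"
  define C where "C = \<bar>((1-beta)*E F + beta*eps - g + (1-q)*(Bc/q + 2*Bc/q^2))/q\<bar>"
  have B'nn: "0 \<le> B'" unfolding B'_def using Bc_nonneg q_pos by simp
  have hh_quad: "hh g s \<le> C + B' * real s ^ 2" for s
  proof -
    have "real s \<le> real s ^ 2" by (cases s) (auto simp: power2_eq_square)
    then have "2*Bc/q^2 * real s \<le> 2*Bc/q^2 * real s ^ 2"
      using Bc_nonneg q_pos by (intro mult_left_mono) auto
    moreover have "hT g s = Bc/q * real s ^ 2 + 2*Bc/q^2 * real s
       + ((1-beta)*E F + beta*eps - g + (1-q)*(Bc/q + 2*Bc/q^2))/q" unfolding hT_def by simp
    moreover have "((1-beta)*E F + beta*eps - g + (1-q)*(Bc/q + 2*Bc/q^2))/q \<le> C"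
      unfolding C_def by (rule abs_ge_self)
    moreover have "B' * real s ^ 2 = Bc/q * real s ^ 2 + 2*Bc/q^2 * real s ^ 2"
      unfolding B'_def by (simp add: algebra_simps)
    ultimately have "hT g s \<le> C + B' * real s ^ 2" by linarith
    then show ?thesis using hh_upper[of g s] by linarith
  qed
  let ?\<phi> = "stationary_det f"
  have Af: "\<And>h s a. a \<in> set_pmf (?\<phi> h s) \<Longrightarrow> a \<subseteq> {1..N}"
    using fsub unfolding stationary_det_def by auto
  have finf: "finite (set_pmf (hist_pmf p r ?\<phi> T))" for T
    using fin_hist[of ?\<phi> T] Af by blast
  have up: "total_cost p c r beta eps ?\<phi> T \<le> real T * g - Lb" for T
  proof -
    have "measure_pmf.expectation (hist_pmf p r ?\<phi> T) (\<lambda>(h, s). 1 * cs h + hh g s) \<le> real T * g + hh g 1"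
    proof (rule drift_upper[OF Af])
      fix h s a assume "a \<in> set_pmf (?\<phi> h s)"
      then have "a = f s" unfolding stationary_det_def by simp
      then show "1 * U s a + (Q a * hh g 1 + (1 - Q a) * hh g (Suc s)) \<le> hh g s + g"
        using f_props[of s] g(3) by simp
    qed
    moreover have "measure_pmf.expectation (hist_pmf p r ?\<phi> T) (\<lambda>(h, s). 1 * cs h + hh g s)
        = total_cost p c r beta eps ?\<phi> T + measure_pmf.expectation (hist_pmf p r ?\<phi> T) (\<lambda>(h, s). hh g s)"
      using exp_split[OF finf, where w=1 and k="hh g"] tc_eq[of ?\<phi> T] by simp
    moreover have "Lb \<le> measure_pmf.expectation (hist_pmf p r ?\<phi> T) (\<lambda>(h, s). hh g s)"
    proof -
      have "measure_pmf.expectation (hist_pmf p r ?\<phi> T) (\<lambda>_. Lb) \<le> measure_pmf.expectation (hist_pmf p r ?\<phi> T) (\<lambda>(h, s). hh g s)"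
        using finf Lb by (intro exp_mono_fin) auto
      then show ?thesis by simp
    qed
    ultimately show ?thesis using g(3) by linarith
  qed
  have Vf: "avg_cost p c r beta eps ?\<phi> \<le> ereal g"
    unfolding avg_cost_def
  proof (rule limsup_upper_aux[where D = "- Lb"])
    fix T :: nat assume T: "T \<ge> 1"
    then have "total_cost p c r beta eps ?\<phi> T / real T \<le> (real T * g - Lb) / real T"
      using up[of T] by (intro divide_right_mono) auto
    also have "\<dots> = g + - Lb / real T" using T by (simp add: field_simps)
    finally show "total_cost p c r beta eps ?\<phi> T / real T \<le> g + - Lb / real T" .
  qed
  have Vpsi: "ereal g \<le> avg_cost p c r beta eps \<psi>" if v: "valid_policy N \<psi>" for \<psi>
  proof -
    have A: "\<And>h s a. a \<in> set_pmf (\<psi> h s) \<Longrightarrow> a \<subseteq> {1..N}"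
      using v unfolding valid_policy_def by auto
    have finA: "finite (set_pmf (hist_pmf p r \<psi> T))" for T
      using fin_hist[of \<psi> T] A by blast
    show ?thesis unfolding avg_cost_def
    proof (rule limsup_lower_aux)
      fix e :: real assume e: "0 < e"
      define lam where "lam = e * beta * eps / (3 * (g + 1))"
      have lam: "0 < lam" unfolding lam_def using e b0 e0 g by simp
      define w where "w = 1 + 3 * lam / (beta * eps)"
      have w1: "1 \<le> w" unfolding w_def using lam b0 e0 by simp
      have gw: "g * (w - 1) \<le> e"
      proof -
        have gp: "g + 1 \<noteq> 0" "beta * eps \<noteq> 0" using g b0 e0 by auto
        have "w - 1 = 3 * (e * beta * eps / (3 * (g + 1))) / (beta * eps)" unfolding w_def lam_def by simp
        also have "\<dots> = e / (g + 1)"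
        proof -
          have "3 * (e * beta * eps / (3 * (g + 1))) = (e * (beta * eps)) / (g + 1)"
            by (simp only: times_divide_eq_right mult_divide_mult_cancel_left_if) (simp add: mult.assoc)
          then show ?thesis using gp by simp
        qed
        finally have "g * (w - 1) = e * (g / (g + 1))" by simp
        also have "\<dots> \<le> e * 1" using e g by (intro mult_left_mono) auto
        finally show ?thesis by simp
      qed
      define k where "k s = hh g s - lam * real s ^ 3" for s
      define M where "M = C + B' * (B' / lam)^2"
      have kM: "k s \<le> M" for s
        using hh_quad[of s] cubic_bound[OF B'nn lam, of s] unfolding k_def M_def by linarith
      have drift: "k s + g \<le> w * U s a + (Q a * k 1 + (1 - Q a) * k (Suc s))" if a: "a \<subseteq> {1..N}" for s a
      proof -
        have h1: "hh g s + g \<le> U s a + (1 - Q a) * hh g (Suc s)"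
          using acoe[OF g(1,2) a, of s] by simp
        have h2: "lam * (Q a * 1 + (1 - Q a) * (real s + 1)^3 - real s ^ 3) \<le> lam * (3 * U s a / (beta*eps))"
          using cube_drift[OF a, of s] lam by (intro mult_left_mono) auto
        have h2': "lam * (Q a * 1 + (1 - Q a) * (real s + 1)^3) - lam * real s ^ 3 \<le> lam * (3 * U s a / (beta*eps))"
          using h2 by (simp add: right_diff_distrib)
        have E1: "w * U s a = U s a + lam * (3 * U s a / (beta*eps))" unfolding w_def by (simp add: algebra_simps)
        have E2: "Q a * k 1 + (1 - Q a) * k (Suc s) = (1 - Q a) * hh g (Suc s) - lam * (Q a * 1 + (1 - Q a) * (real s + 1)^3)"
          unfolding k_def using g(3) by (simp add: algebra_simps)
        have E3: "k s = hh g s - lam * real s ^ 3" unfolding k_def by simp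
        show ?thesis unfolding E1 E2 E3 using h1 h2' by linarith
      qed
      define D where "D = max 0 (lam + M)"
      have Dnn: "0 \<le> D" unfolding D_def by simp
      show "\<exists>D. \<forall>T\<ge>1. g - e - D / real T \<le> total_cost p c r beta eps \<psi> T / real T"
      proof (intro exI[of _ D] allI impI)
        fix T :: nat assume T: "1 \<le> T"
        have dl: "real T * g + k 1 \<le> measure_pmf.expectation (hist_pmf p r \<psi> T) (\<lambda>(h, s). w * cs h + k s)"
        proof (rule drift_lower)
          fix h s a assume "a \<in> set_pmf (\<psi> h s)" then show "a \<subseteq> {1..N}" by (rule A)
        next
          fix h s a assume "a \<in> set_pmf (\<psi> h s)"
          then have "a \<subseteq> {1..N}" by (rule A)
          then show "k s + g \<le> w * U s a + (Q a * k 1 + (1 - Q a) * k (Suc s))" by (rule drift)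
        qed
        have "measure_pmf.expectation (hist_pmf p r \<psi> T) (\<lambda>(h, s). w * cs h + k s)
            = w * total_cost p c r beta eps \<psi> T + measure_pmf.expectation (hist_pmf p r \<psi> T) (\<lambda>(h, s). k s)"
          using exp_split[OF finA, where w=w and k=k] tc_eq[of \<psi> T] by simp
        moreover have "measure_pmf.expectation (hist_pmf p r \<psi> T) (\<lambda>(h, s). k s) \<le> M"
        proof -
          have "measure_pmf.expectation (hist_pmf p r \<psi> T) (\<lambda>(h, s). k s) \<le> measure_pmf.expectation (hist_pmf p r \<psi> T) (\<lambda>_. M)"
            using finA kM by (intro exp_mono_fin) auto
          then show ?thesis by simp
        qed
        moreover have "k 1 = - lam" unfolding k_def using g(3) by simp
        ultimately have tc: "real T * g - D \<le> w * total_cost p c r beta eps \<psi> T"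
          using dl unfolding D_def by linarith
        have "g - e - D / real T \<le> g / w - D / (w * real T)"
        proof -
          have "g - e \<le> g / w"
          proof -
            have "g * (2 - w) \<le> g / w"
            proof -
              have "w * (2 - w) = 1 - (w - 1)^2" by (simp add: power2_eq_square algebra_simps)
              then have "w * (2 - w) \<le> 1" by simp
              then have "g * (w * (2 - w)) \<le> g * 1" using g(1) by (intro mult_left_mono)
              then show ?thesis using w1 by (simp add: field_simps)
            qed
            then show ?thesis using gw by (simp add: algebra_simps)
          qed
          moreover have "D / (w * real T) \<le> D / real T"
            using w1 T Dnn by (intro divide_left_mono) auto
          ultimately show ?thesis by linarith
        qed
        also have "\<dots> = (real T * g - D) / (w * real T)" using w1 T by (simp add: field_simps)
        also have "\<dots> \<le> (w * total_cost p c r beta eps \<psi> T) / (w * real T)"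
          using tc w1 T by (intro divide_right_mono) auto
        also have "\<dots> = total_cost p c r beta eps \<psi> T / real T" using w1 by simp
        finally show "g - e - D / real T \<le> total_cost p c r beta eps \<psi> T / real T" .
      qed
    qed
  qed
  show ?thesis using fsub Vf Vpsi by (meson order_trans)
qed

end


theorem lemma1:
  fixes N :: nat and p c r :: "nat \<Rightarrow> real" and beta eps :: real
  assumes "N \<ge> 1"
    and "\<And>n. n \<in> {1..N} \<Longrightarrow> 0 < p n \<and> p n \<le> 1"
    and "\<And>n. n \<in> {1..N} \<Longrightarrow> 0 \<le> c n"
    and "\<And>n. n \<in> {1..N} \<Longrightarrow> 0 < r n \<and> r n \<le> 1"
    and "0 < beta" and "beta < 1" and "0 < eps"
  shows "\<exists>f :: nat \<Rightarrow> nat set. (\<forall>s. f s \<subseteq> {1..N}) \<and>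
           (\<forall>\<psi>. valid_policy N \<psi> \<longrightarrow>
              avg_cost p c r beta eps (stationary_det f) \<le> avg_cost p c r beta eps \<psi>)"
proof -
  interpret aoi N p c r beta eps
    using assms by unfold_locales auto
  show ?thesis by (rule main)
qed

end
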